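(* Assume $abcd\neq0$. For $n\in\{0,1,\dots,M-1\}$, with $\|\vec\varphi(n)\|^2=|\varphi(n;R)|^2+|\varphi(n;L)|^2$, \[\|\vec\varphi(n)\|^2=\begin{cases}\dfrac{|a|^2+|b|^2{\zeta'_{M-n-1}}^2+|b|^2{\zeta'_{M-n}}^2}{|a|^2+|b|^2{\zeta'_M}^2}, & \omega\notin\partial B,\\[3mm] \dfrac{|a|^2+|b|^2(M-n)^2+|b|^2(M-n-1)^2}{|a|^2+M^2|b|^2}, & \omega\in\partial B.\end{cases}\]
   Context: Setting: $M\ge1$, $C=\begin{bmatrix} a&b\\ c&d\end{bmatrix}$ a $2\times2$ unitary matrix, $\Delta=\det C$; $|L\rangle=(1,0)^\top$, $|R\rangle=(0,1)^\top$; $\Gamma_M=\{0,\dots,M-1\}$. $E_M$ is the linear map on $\ell^2(\Gamma_M;\mathbb{C}^2)$ with $(E_M\varphi)(x)=P\varphi(x+1)+Q\varphi(x-1)$, $\varphi(-1)=\varphi(M)=0$, $P=\begin{bmatrix} a&b\\0&0\end{bmatrix}$, $Q=\begin{bmatrix}0&0\\c&d\end{bmatrix}$. For $\xi\in\mathbb{R}$, $z=e^{-i\xi}$, let $\varphi$ be the unique solution of $(z-E_M)\varphi=\delta_0|R\rangle$, $\varphi(x;L)=\langle L|\varphi(x)\rangle$, $\varphi(x;R)=\langle R|\varphi(x)\rangle$. Fix a square root $\Delta^{1/2}$, set $\omega=\Delta^{-1/2}z$ (on the unit circle), $x(\omega)=\frac{\omega+\omega^{-1}}{2|a|}$, $\zeta'_m=U_{m-1}(x(\omega))$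 with $U_m$ the Chebyshev polynomials of the second kind ($U_{-1}=0$, $U_0=1$, $U_{m+1}(t)=2tU_m(t)-U_{m-1}(t)$), and $\partial B=\{\omega:|x(\omega)|=1\}$. *)

theory Defs
  imports "HOL-Analysis.Analysis"
begin

fun chebU :: "nat \<Rightarrow> complex \<Rightarrow> complex" where
  "chebU 0 t = 1"
| "chebU (Suc 0) t = 2 * t"
| "chebU (Suc (Suc m)) t = 2 * t * chebU (Suc m) t - chebU m t"

definition zeta' :: "nat \<Rightarrow> complex \<Rightarrow> complex" where
  "zeta' m t = (if m = 0 then 0 else chebU (m - 1) t)"

text \<open>The coin C = [[a,b],[c,d]] is unitary (C^* C = I written out).\<close>
definition unitary2 :: "complex \<Rightarrow> complex \<Rightarrow> complex \<Rightarrow> complex \<Rightarrow> bool" where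
  "unitary2 a b c d \<longleftrightarrow>
     cmod a ^ 2 + cmod c ^ 2 = 1 \<and> cmod b ^ 2 + cmod d ^ 2 = 1 \<and> cnj a * b + cnj c * d = 0"

text \<open>E_M acting on phi = (phiL, phiR) on Gamma_M = {0..M-1}, extended by zero
  (so phi(-1) = phi(M) = 0):
  (E phi)(x) = P phi(x+1) + Q phi(x-1), P = [[a,b],[0,0]], Q = [[0,0],[c,d]].\<close>
definition extZ :: "nat \<Rightarrow> (int \<Rightarrow> complex) \<Rightarrow> int \<Rightarrow> complex" where
  "extZ M f y = (if 0 \<le> y \<and> y < int M then f y else 0)"

definition EM_L :: "nat \<Rightarrow> complex \<Rightarrow> complex \<Rightarrow> (int \<Rightarrow> complex) \<Rightarrow> (int \<Rightarrow> complex) \<Rightarrow> int \<Rightarrow> complex" where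
  "EM_L M a b phiL phiR x = a * extZ M phiL (x + 1) + b * extZ M phiR (x + 1)"

definition EM_R :: "nat \<Rightarrow> complex \<Rightarrow> complex \<Rightarrow> (int \<Rightarrow> complex) \<Rightarrow> (int \<Rightarrow> complex) \<Rightarrow> int \<Rightarrow> complex" where
  "EM_R M c d phiL phiR x = c * extZ M phiL (x - 1) + d * extZ M phiR (x - 1)"

definition solves_resolvent ::
  "nat \<Rightarrow> complex \<Rightarrow> complex \<Rightarrow> complex \<Rightarrow> complex \<Rightarrow> complex \<Rightarrow> (int \<Rightarrow> complex) \<Rightarrow> (int \<Rightarrow> complex) \<Rightarrow> bool" where
  "solves_resolvent M a b c d z phiL phiR \<longleftrightarrow>
     (\<forall>x. 0 \<le> x \<and> x < int M \<longrightarrow>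
        z * phiL x - EM_L M a b phiL phiR x = 0 \<and>
        z * phiR x - EM_R M c d phiL phiR x = (if x = 0 then 1 else 0))"

end

theory Submission
  imports Defs
begin

fun V :: "nat \<Rightarrow> real \<Rightarrow> real" where
  "V 0 r = 0"
| "V (Suc 0) r = 1"
| "V (Suc (Suc k)) r = 2 * r * V (Suc k) r - V k r"

lemma zeta'_rec: "zeta' (Suc (Suc k)) t = 2 * t * zeta' (Suc k) t - zeta' k t"
  by (cases k) (auto simp: zeta'_def)

lemma zeta'_V: "zeta' k (complex_of_real r) = complex_of_real (V k r)"
proof (induction k r rule: V.induct)
  case (1 r) then show ?case by (simp add: zeta'_def)
next
  case (2 r) then show ?case by (simp add: zeta'_def)
next
  case (3 k r) then show ?case by (simp add: zeta'_rec)
qed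

lemma V_id: "(V (Suc k) r)^2 + (V k r)^2 - 2*r*V (Suc k) r * V k r = 1"
proof (induction k)
  case 0 then show ?case by simp
next
  case (Suc k)
  have "(V (Suc (Suc k)) r)^2 + (V (Suc k) r)^2 - 2*r*V (Suc (Suc k)) r * V (Suc k) r
      = (V (Suc k) r)^2 + (V k r)^2 - 2*r*V (Suc k) r * V k r"
    by (simp add: power2_eq_square algebra_simps)
  then show ?case using Suc.IH by simp
qed

lemma V_one: "V k 1 = real k"
  by (induction k "1::real" rule: V.induct) auto

lemma V_mone: "V k (-1) = (-1)^(k+1) * real k"
  by (induction k "-1::real" rule: V.induct) (auto simp: algebra_simps)

lemma V_pm1: "\<bar>r\<bar> = 1 \<Longrightarrow> (V k r)^2 = (real k)^2"
proof -
  have m: "((-1::real)^k)^2 = 1" by (simp add: power_mult[symmetric] power_mult_distrib)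
  assume "\<bar>r\<bar> = 1"
  then have "r = 1 \<or> r = -1" by auto
  then show ?thesis using m by (auto simp: V_one V_mone power_mult_distrib)
qed


lemma unitary_facts:
  fixes a b c d :: complex
  assumes u: "unitary2 a b c d" and nz: "a * b * c * d \<noteq> 0"
  shows "d = (a*d - b*c) * cnj a" "c = - (a*d - b*c) * cnj b"
    "cmod a ^ 2 + cmod b ^ 2 = 1" "cmod (a*d - b*c) = 1"
proof -
  from u have h1: "cmod a ^ 2 + cmod c ^ 2 = 1" and h2: "cmod b ^ 2 + cmod d ^ 2 = 1"
    and h3: "cnj a * b + cnj c * d = 0" by (auto simp: unitary2_def)
  have e1: "a * cnj a + c * cnj c = 1"
    using arg_cong[OF h1, of complex_of_real] by (simp only: of_real_add complex_norm_square of_real_1)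
  have e2: "b * cnj b + d * cnj d = 1"
    using arg_cong[OF h2, of complex_of_real] by (simp only: of_real_add complex_norm_square of_real_1)
  have h3': "a * cnj b + c * cnj d = 0" using arg_cong[OF h3, of cnj] by simp
  have "(a*d-b*c)*cnj a = d*(a*cnj a + c*cnj c)" using h3 by algebra
  then show dd: "d = (a*d - b*c) * cnj a" using e1 by simp
  have "(a*d-b*c)*cnj b = -c*(b*cnj b + d*cnj d)" using h3' by algebra
  then show cc: "c = - (a*d - b*c) * cnj b" using e2 by algebra
  define D where "D = a*d - b*c"
  have Dnz: "D \<noteq> 0" using dd nz unfolding D_def by auto
  have "D = D * (a * cnj a + b * cnj b)"
    using dd cc unfolding D_def by (metis (no_types, lifting) D_def cc dd mult.commute ring_class.ring_distribs(1) right_minus_eq mult.assoc mult_minus_left diff_minus_eq_add)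
  then have ab1: "a * cnj a + b * cnj b = 1" using Dnz by simp
  then have "complex_of_real (cmod a ^ 2 + cmod b ^ 2) = 1" by (simp only: of_real_add complex_norm_square)
  then show "cmod a ^ 2 + cmod b ^ 2 = 1" using of_real_eq_1_iff by blast
  have "c * cnj c + d * cnj d = D * cnj D * (a * cnj a + b * cnj b)"
    using dd cc unfolding D_def[symmetric] by (simp add: algebra_simps)
  moreover have "c * cnj c + d * cnj d = 1" using e1 e2 ab1 by algebra
  ultimately have "D * cnj D = 1" using ab1 by simp
  then have "complex_of_real (cmod D ^ 2) = 1" by (simp only: complex_norm_square)
  then have "cmod D ^ 2 = 1" using of_real_eq_1_iff by blast
  then show "cmod (a*d - b*c) = 1" unfolding D_def using norm_ge_zero[of "a*d-b*c"] by (auto simp: power2_eq_1_iff)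
qed

theorem mainTheorem6:
  fixes M :: nat and a b c d s :: complex and xi :: real and phiL phiR :: "int \<Rightarrow> complex"
  assumes "M \<ge> 1"
    and "unitary2 a b c d"
    and "a * b * c * d \<noteq> 0"
    and "s ^ 2 = a * d - b * c"
    and "solves_resolvent M a b c d (cis (- xi)) phiL phiR"
    and "n < M"
  shows "let z = cis (- xi); \<omega> = z / s; t = (\<omega> + inverse \<omega>) / (2 * complex_of_real (cmod a));
             nrm = complex_of_real (cmod (phiR (int n)) ^ 2 + cmod (phiL (int n)) ^ 2)
         in (cmod t \<noteq> 1 \<longrightarrow>
               nrm = (complex_of_real (cmod a ^ 2) + complex_of_real (cmod b ^ 2) * zeta' (M - n - 1) t ^ 2
                       + complex_of_real (cmod b ^ 2) * zeta' (M - n) t ^ 2)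
                     / (complex_of_real (cmod a ^ 2) + complex_of_real (cmod b ^ 2) * zeta' M t ^ 2))
          \<and> (cmod t = 1 \<longrightarrow>
               nrm = complex_of_real ((cmod a ^ 2 + cmod b ^ 2 * real (M - n) ^ 2 + cmod b ^ 2 * real (M - n - 1) ^ 2)
                     / (cmod a ^ 2 + real M ^ 2 * cmod b ^ 2)))"
proof -
  define z where "z = cis (- xi)"
  define \<omega> where "\<omega> = z / s"
  define t where "t = (\<omega> + inverse \<omega>) / (2 * complex_of_real (cmod a))"
  have nz: "a \<noteq> 0" "b \<noteq> 0" "c \<noteq> 0" "d \<noteq> 0" using assms(3) by auto
  note U = unitary_facts[OF assms(2,3)]
  have z1: "cmod z = 1" unfolding z_def by simp
  have znz: "z \<noteq> 0" using z1 by auto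
  have s1: "cmod s = 1"
  proof -
    have "cmod s ^ 2 = 1" using U(4) assms(4) by (metis norm_power)
    then show ?thesis using norm_ge_zero[of s] by (auto simp: power2_eq_1_iff)
  qed
  have snz: "s \<noteq> 0" using s1 by auto
  have w1: "cmod \<omega> = 1" unfolding \<omega>_def using z1 s1 by (simp add: norm_divide)
  have wnz: "\<omega> \<noteq> 0" using w1 by auto
  have zsw: "z = s * \<omega>" unfolding \<omega>_def using snz by simp
  have winv: "inverse \<omega> = cnj \<omega>"
  proof -
    have "\<omega> * cnj \<omega> = 1" using w1 complex_norm_square[of \<omega>] by simp
    then show ?thesis by (metis inverse_unique)
  qed
  define ca where "ca = cmod a"
  have ca0: "ca > 0" using nz unfolding ca_def by simp
  define r where "r = Re \<omega> / ca"
  have tr: "t = complex_of_real r"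
    unfolding t_def r_def ca_def winv complex_add_cnj by (simp add: field_simps)
  have two_r: "complex_of_real (2 * r * ca) = \<omega> + inverse \<omega>"
    unfolding r_def winv complex_add_cnj using ca0 by simp
  have aa: "a * cnj a = complex_of_real (ca ^ 2)" unfolding ca_def by (simp only: complex_norm_square)
  have bb: "b * cnj b = complex_of_real (1 - ca ^ 2)"
  proof -
    have "1 - ca^2 = cmod b ^ 2" using U(3) unfolding ca_def by simp
    then show ?thesis by (simp only: complex_norm_square)
  qed
  have dd: "d = s^2 * cnj a" using U(1) assms(4) by simp
  have cc: "c = -(s^2) * cnj b" using U(2) assms(4) by simp
  define \<rho> where "\<rho> = a / (s * complex_of_real ca)"
  define p where "p k = \<rho>^k * complex_of_real (V k r) * b * complex_of_real ca / (a * \<omega>)" for k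
  define q where "q k = \<rho>^k * (complex_of_real (V (Suc k) r) - complex_of_real ca / \<omega> * complex_of_real (V k r))" for k
  have canz: "complex_of_real ca \<noteq> 0" using ca0 by simp
  have rec1: "z * p (Suc k) = a * p k + b * q k" for k
  proof -
    have "z * p (Suc k) = \<rho>^k * b * complex_of_real (V (Suc k) r)"
      unfolding p_def \<rho>_def power_Suc zsw using nz snz wnz canz by (simp add: field_simps)
    moreover have "a * p k + b * q k = \<rho>^k * b * complex_of_real (V (Suc k) r)"
      unfolding p_def q_def using nz snz wnz canz by (simp add: field_simps)
    ultimately show ?thesis by simp
  qed
  have aux1: "s^2 * cnj a * \<rho> = s * complex_of_real ca"
  proof -
    have "s^2 * cnj a * \<rho> = s * (a * cnj a) / complex_of_real ca"
      unfolding \<rho>_def using snz canz by (simp add: field_simps power2_eq_square)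
    also have "\<dots> = s * complex_of_real ca" unfolding aa using canz by (simp add: power2_eq_square)
    finally show ?thesis .
  qed
  have aux2: "s^2 * cnj b * b * \<rho> * complex_of_real ca / (a*\<omega>) = s * complex_of_real (1 - ca^2) / \<omega>"
  proof -
    have "s^2 * cnj b * b * \<rho> * complex_of_real ca / (a*\<omega>) = s * (b * cnj b) / \<omega>"
      unfolding \<rho>_def using snz canz nz wnz by (simp add: field_simps power2_eq_square)
    then show ?thesis unfolding bb .
  qed
  have rec2: "d * q (Suc k) = z * q k - c * p (Suc k)" for k
  proof -
    define A where "A = complex_of_real (V (Suc (Suc k)) r)"
    define B where "B = complex_of_real (V (Suc k) r)"
    define C where "C = complex_of_real (V k r)"
    have ABC: "complex_of_real ca * A = (\<omega> + inverse \<omega>) * B - complex_of_real ca * C"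
      unfolding A_def B_def C_def two_r[symmetric] by (simp add: algebra_simps)
    have L: "d * q (Suc k) = \<rho>^k * (s * complex_of_real ca) * (A - complex_of_real ca / \<omega> * B)"
      unfolding q_def dd aux1[symmetric] A_def B_def by (simp add: algebra_simps)
    have R: "z * q k - c * p (Suc k) = \<rho>^k * (z * (B - complex_of_real ca / \<omega> * C)
               + B * (s * complex_of_real (1 - ca^2) / \<omega>))"
      unfolding q_def p_def cc aux2[symmetric] B_def C_def by (simp add: algebra_simps)
    have "(s * complex_of_real ca) * (A - complex_of_real ca / \<omega> * B)
        = z * (B - complex_of_real ca / \<omega> * C) + B * (s * complex_of_real (1 - ca^2) / \<omega>)"
    proof -
      have "(s * complex_of_real ca) * (A - complex_of_real ca / \<omega> * B)
          = s * (complex_of_real ca * A) - s * complex_of_real (ca^2) / \<omega> * B"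
        by (simp add: algebra_simps power2_eq_square)
      also have "\<dots> = s * ((\<omega> + inverse \<omega>) * B - complex_of_real ca * C) - s * complex_of_real (ca^2) / \<omega> * B"
        unfolding ABC ..
      also have "\<dots> = z * (B - complex_of_real ca / \<omega> * C) + B * (s * complex_of_real (1 - ca^2) / \<omega>)"
        unfolding zsw using wnz by (simp add: field_simps)
      finally show ?thesis .
    qed
    then show ?thesis unfolding L R by (metis mult.assoc)
  qed
  have sol: "\<And>x. 0 \<le> x \<Longrightarrow> x < int M \<Longrightarrow>
        z * phiL x - EM_L M a b phiL phiR x = 0 \<and>
        z * phiR x - EM_R M c d phiL phiR x = (if x = 0 then 1 else 0)"
    using assms(5) unfolding solves_resolvent_def z_def by blast
  define \<beta> where "\<beta> = phiR (int M - 1)"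
  have bk: "j < M \<longrightarrow> phiL (int M - 1 - int j) = \<beta> * p j \<and> phiR (int M - 1 - int j) = \<beta> * q j" for j
  proof (induction j)
    case 0
    have "z * phiL (int M - 1) - EM_L M a b phiL phiR (int M - 1) = 0" using sol[of "int M - 1"] assms(1) by auto
    then have "z * phiL (int M - 1) = 0" by (simp add: EM_L_def extZ_def)
    then show ?case using znz by (simp add: p_def q_def \<beta>_def)
  next
    case (Suc j)
    show ?case
    proof
      assume j: "Suc j < M"
      define x where "x = int M - 1 - int (Suc j)"
      have x0: "0 \<le> x" "x < int M" using j unfolding x_def by auto
      have x1: "x + 1 = int M - 1 - int j" unfolding x_def by simp
      have "x + 1 < int M" using j unfolding x_def by simp
      from Suc.IH j have IH: "phiL (x+1) = \<beta> * p j" "phiR (x+1) = \<beta> * q j" unfolding x1 by auto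
      have "z * phiL x - EM_L M a b phiL phiR x = 0" using sol x0 by blast
      then have "z * phiL x = a * phiL (x+1) + b * phiR (x+1)"
        using x0 \<open>x + 1 < int M\<close> by (simp add: EM_L_def extZ_def)
      also have "\<dots> = \<beta> * (z * p (Suc j))" unfolding IH rec1 by (simp add: algebra_simps)
      finally have L: "phiL x = \<beta> * p (Suc j)" using znz by simp
      have "z * phiR (x+1) - EM_R M c d phiL phiR (x+1) = (if x + 1 = 0 then 1 else 0)"
        using sol[of "x+1"] x0 \<open>x + 1 < int M\<close> by auto
      then have "z * phiR (x+1) = c * phiL x + d * phiR x"
        using x0 by (simp add: EM_R_def extZ_def)
      then have "d * phiR x = \<beta> * (z * q j - c * p (Suc j))"
        unfolding IH L by (simp add: algebra_simps)
      also have "\<dots> = \<beta> * (d * q (Suc j))" unfolding rec2 ..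
      finally have R: "phiR x = \<beta> * q (Suc j)" using nz by simp
      show "phiL (int M - 1 - int (Suc j)) = \<beta> * p (Suc j) \<and> phiR (int M - 1 - int (Suc j)) = \<beta> * q (Suc j)"
        using L R unfolding x_def by simp
    qed
  qed
  have rho1: "cmod \<rho> = 1" unfolding \<rho>_def ca_def using s1 nz by (simp add: norm_divide norm_mult)
  have pn: "cmod (p k) ^ 2 = cmod b ^ 2 * (V k r)^2" for k
    unfolding p_def using rho1 w1 ca0 nz unfolding ca_def
    by (simp add: norm_divide norm_mult norm_power power_mult_distrib)
  have Rew: "Re \<omega> = r * ca" unfolding r_def using ca0 by simp
  have ReIm: "(Re \<omega>)^2 + (Im \<omega>)^2 = 1" using w1 cmod_power2[of \<omega>] by simp
  have qn: "cmod (q k) ^ 2 = ca^2 + (1 - ca^2) * (V (Suc k) r)^2" for k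
  proof -
    define X where "X = V (Suc k) r" 
    define Y where "Y = V k r" 
    have "cmod (q k) = cmod (complex_of_real X - complex_of_real ca * cnj \<omega> * complex_of_real Y)"
      unfolding q_def X_def Y_def using rho1 by (simp add: norm_mult norm_power divide_inverse winv)
    then have "cmod (q k) ^ 2 = (X - ca * Re \<omega> * Y)^2 + (ca * Im \<omega> * Y)^2"
      by (simp add: cmod_power2)
    also have "\<dots> = X^2 - 2 * ca^2 * r * X * Y + ca^2 * Y^2 * ((Re \<omega>)^2 + (Im \<omega>)^2)"
      unfolding Rew by (simp add: power2_eq_square algebra_simps)
    also have "\<dots> = X^2 + ca^2 * (X^2 + Y^2 - 2 * r * X * Y) - ca^2 * X^2"
      unfolding ReIm by (simp add: algebra_simps)
    also have "\<dots> = ca^2 + (1 - ca^2) * X^2"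
      using V_id[of k r] unfolding X_def[symmetric] Y_def[symmetric] by (simp add: algebra_simps)
    finally show ?thesis unfolding X_def .
  qed
  have cb: "cmod b ^ 2 = 1 - ca^2" using U(3) unfolding ca_def by simp
  have b0: "\<beta> * q (M - 1) * z = 1"
  proof -
    have "z * phiR 0 - EM_R M c d phiL phiR 0 = 1" using sol[of 0] assms(1) by auto
    then have "z * phiR 0 = 1" by (simp add: EM_R_def extZ_def)
    moreover have "phiR 0 = \<beta> * q (M - 1)" using bk[of "M - 1"] assms(1) by (simp add: of_nat_diff)
    ultimately show ?thesis by (simp add: algebra_simps)
  qed
  have bq: "cmod \<beta> ^ 2 * (ca^2 + (1 - ca^2) * (V M r)^2) = 1"
  proof -
    have "cmod \<beta> * cmod (q (M - 1)) = 1" using arg_cong[OF b0, of cmod] z1 by (simp add: norm_mult)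
    then have "cmod \<beta> ^ 2 * cmod (q (M - 1)) ^ 2 = 1" by (metis power_mult_distrib power_one)
    then show ?thesis unfolding qn using assms(1) by simp
  qed
  define k where "k = M - 1 - n"
  have kn: "int n = int M - 1 - int k" "M - n - 1 = k" "M - n = Suc k" using assms(6) unfolding k_def by auto
  have ph: "phiL (int n) = \<beta> * p k" "phiR (int n) = \<beta> * q k" using bk[of k] assms(6) unfolding kn(1) k_def by auto
  define Den where "Den = ca^2 + (1 - ca^2) * (V M r)^2"
  have Den0: "Den > 0" unfolding Den_def using ca0 cb
    by (smt (verit, ccfv_SIG) mult_nonneg_nonneg zero_le_power2 zero_less_power)
  have main: "cmod (phiR (int n)) ^ 2 + cmod (phiL (int n)) ^ 2
      = (ca^2 + cmod b ^ 2 * (V k r)^2 + cmod b ^ 2 * (V (Suc k) r)^2) / (ca^2 + cmod b ^ 2 * (V M r)^2)"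
  proof -
    have "cmod (phiR (int n)) ^ 2 + cmod (phiL (int n)) ^ 2 = cmod \<beta> ^ 2 * (cmod (q k) ^ 2 + cmod (p k) ^ 2)"
      unfolding ph by (simp add: norm_mult power_mult_distrib algebra_simps)
    also have "\<dots> = cmod \<beta> ^ 2 * (ca^2 + cmod b ^ 2 * (V k r)^2 + cmod b ^ 2 * (V (Suc k) r)^2)"
      unfolding qn pn cb by (simp add: algebra_simps)
    also have "cmod \<beta> ^ 2 = 1 / Den" using bq Den0 unfolding Den_def by (simp add: field_simps)
    finally show ?thesis unfolding Den_def cb by simp
  qed
  define nrm where "nrm = complex_of_real (cmod (phiR (int n)) ^ 2 + cmod (phiL (int n)) ^ 2)"
  have G1: "nrm = (complex_of_real (cmod a ^ 2) + complex_of_real (cmod b ^ 2) * zeta' (M - n - 1) t ^ 2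
                       + complex_of_real (cmod b ^ 2) * zeta' (M - n) t ^ 2)
                     / (complex_of_real (cmod a ^ 2) + complex_of_real (cmod b ^ 2) * zeta' M t ^ 2)"
    unfolding nrm_def tr zeta'_V kn(2,3) main ca_def by simp
  have G2: "nrm = complex_of_real ((cmod a ^ 2 + cmod b ^ 2 * real (M - n) ^ 2 + cmod b ^ 2 * real (M - n - 1) ^ 2)
                     / (cmod a ^ 2 + real M ^ 2 * cmod b ^ 2))" if "cmod t = 1"
  proof -
    have r1: "\<bar>r\<bar> = 1" using that unfolding tr by simp
    have kk: "real (M - n - 1) = real k" "real (M - n) = real (Suc k)" using kn by auto
    show ?thesis unfolding nrm_def main kk V_pm1[OF r1] ca_def by (simp add: algebra_simps)
  qed
  show ?thesis
    unfolding Let_def z_def[symmetric] \<omega>_def[symmetric] t_def[symmetric] nrm_def[symmetric]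
    using G1 G2 by blast
qed

end
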